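(* Let $R$ be a ring and $n$ a positive integer. If every proper ideal of $R$ is weakly $n$-absorbing, then $\mathrm{Jac}(R)^{n+1}=0$, and so $\mathrm{Jac}(R)=\mathrm{Nil}(R)$.
   Context: All rings are commutative with $1\neq0$. A proper ideal $I$ of $R$ is weakly $n$-absorbing if whenever $0\neq a_1\cdots a_{n+1}\in I$ with $a_1,\dots,a_{n+1}\in R$, there are $n$ of the $a_i$'s whose product is in $I$. $\mathrm{Jac}(R)$ is the Jacobson radical (intersection of all maximal ideals) and $\mathrm{Nil}(R)$ the ideal of nilpotent elements. *)

theory Defs
  imports "HOL-Algebra.Algebra"
begin

definition weakly_n_absorbing :: "('a, 'b) ring_scheme \<Rightarrow> nat \<Rightarrow> 'a set \<Rightarrow> bool" where
  "weakly_n_absorbing R n I \<longleftrightarrow> ideal I R \<and> I \<noteq> carrier R \<and>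
     (\<forall>a. a \<in> {..n} \<rightarrow> carrier R \<longrightarrow>
        finprod R a {..n} \<noteq> \<zero>\<^bsub>R\<^esub> \<longrightarrow> finprod R a {..n} \<in> I \<longrightarrow>
        (\<exists>i\<le>n. finprod R a ({..n} - {i}) \<in> I))"

definition jacobson :: "('a, 'b) ring_scheme \<Rightarrow> 'a set" where
  "jacobson R = carrier R \<inter> \<Inter> {M. maximalideal M R}"

definition nilrad :: "('a, 'b) ring_scheme \<Rightarrow> 'a set" where
  "nilrad R = {x \<in> carrier R. \<exists>k::nat. x [^]\<^bsub>R\<^esub> k = \<zero>\<^bsub>R\<^esub>}"

fun ideal_pow :: "('a, 'b) ring_scheme \<Rightarrow> 'a set \<Rightarrow> nat \<Rightarrow> 'a set" where
  "ideal_pow R I 0 = carrier R"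
| "ideal_pow R I (Suc k) = ideal_prod R I (ideal_pow R I k)"

end

theory Submission
  imports Defs
begin

fun prods :: "('a, 'b) ring_scheme \<Rightarrow> 'a set \<Rightarrow> nat \<Rightarrow> 'a set" where
  "prods R S 0 = {\<one>\<^bsub>R\<^esub>}"
| "prods R S (Suc m) = {i \<otimes>\<^bsub>R\<^esub> p | i p. i \<in> S \<and> p \<in> prods R S m}"

context cring
begin

lemma krull_exists:
  assumes I: "ideal I R" and one: "\<one> \<notin> I"
  shows "\<exists>M. maximalideal M R \<and> I \<subseteq> M"
proof -
  let ?A = "{K. ideal K R \<and> I \<subseteq> K \<and> \<one> \<notin> K}"
  have "\<exists>M\<in>?A. \<forall>K\<in>(?A). M \<subseteq> K \<longrightarrow> K = M"
  proof (rule subset_Zorn_nonempty)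
    show "?A \<noteq> {}" using I one by blast
  next
    fix C assume C: "C \<noteq> {}" "subset.chain ?A C"
    have "subset.chain {I. ideal I R} C"
      using C(2) unfolding pred_on.chain_def by blast
    from chain_Union_is_ideal[OF this] C(1) have "ideal (\<Union>C) R" by simp
    moreover have "I \<subseteq> \<Union>C" using C unfolding pred_on.chain_def by blast
    moreover have "\<one> \<notin> \<Union>C" using C(2) unfolding pred_on.chain_def by blast
    ultimately show "\<Union>C \<in> ?A" by blast
  qed
  then obtain M where M: "M \<in> ?A" and Mmax: "\<forall>K\<in>(?A). M \<subseteq> K \<longrightarrow> K = M" by blast
  have "maximalideal M R"
  proof (rule maximalidealI)
    show "ideal M R" using M by blast
    show "carrier R \<noteq> M" using M by auto
    fix J assume J: "ideal J R" "M \<subseteq> J" "J \<subseteq> carrier R"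
    show "J = M \<or> J = carrier R"
    proof (cases "\<one> \<in> J")
      case True then show ?thesis using ideal.one_imp_carrier[OF J(1)] by blast
    next
      case False then have "J \<in> ?A" using J M by blast
      then show ?thesis using Mmax J by blast
    qed
  qed
  then show ?thesis using M by blast
qed

lemma jac_unit:
  assumes y: "y \<in> jacobson R" and z: "z \<in> carrier R"
  shows "\<one> \<ominus> z \<otimes> y \<in> Units R"
proof (rule ccontr)
  assume nu: "\<one> \<ominus> z \<otimes> y \<notin> Units R"
  have yc: "y \<in> carrier R" using y unfolding jacobson_def by blast
  define u where "u = \<one> \<ominus> z \<otimes> y"
  have uc: "u \<in> carrier R" unfolding u_def using yc z by simp
  have "\<one> \<notin> PIdl u"
  proof
    assume "\<one> \<in> PIdl u"
    then obtain x where x: "x \<in> carrier R" "\<one> = x \<otimes> u" unfolding cgenideal_def by blast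
    then have "u \<in> Units R" unfolding Units_def using uc m_comm[OF x(1) uc] by auto
    then show False using nu u_def by simp
  qed
  from krull_exists[OF cgenideal_ideal[OF uc] this]
  obtain M where M: "maximalideal M R" "PIdl u \<subseteq> M" by blast
  interpret maximalideal M R by fact
  have "u \<in> M" using M(2) cgenideal_self[OF uc] by blast
  moreover have "y \<in> M" using y M(1) unfolding jacobson_def by blast
  then have "z \<otimes> y \<in> M" using z I_l_closed by blast
  ultimately have "u \<oplus> z \<otimes> y \<in> M" by (rule a_closed)
  moreover have "u \<oplus> z \<otimes> y = \<one>" unfolding u_def using yc z
    by (simp add: a_minus_def add.m_assoc l_neg)
  ultimately have "\<one> \<in> M" by simp
  then show False using one_imp_carrier I_notcarr by simp
qed

lemma jac_carrier: "jacobson R \<subseteq> carrier R"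
  unfolding jacobson_def by blast

lemma prods_carrier: "S \<subseteq> carrier R \<Longrightarrow> prods R S m \<subseteq> carrier R"
  by (induction m) auto

lemma prods_finprod:
  assumes S: "S \<subseteq> carrier R"
  shows "p \<in> prods R S m \<Longrightarrow> \<exists>a \<in> {..<m} \<rightarrow> S. p = finprod R a {..<m}"
proof (induction m arbitrary: p)
  case 0 then show ?case by auto
next
  case (Suc m)
  then obtain i q where iq: "i \<in> S" "q \<in> prods R S m" "p = i \<otimes> q" by auto
  then obtain a where a: "a \<in> {..<m} \<rightarrow> S" "q = finprod R a {..<m}" using Suc.IH by blast
  define a' where "a' = a(m := i)"
  have a': "a' \<in> {..<Suc m} \<rightarrow> S" using a iq unfolding a'_def by (auto simp: Pi_iff less_Suc_eq)
  have a'c: "a' \<in> {..<m} \<rightarrow> carrier R" using a' S by auto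
  have "finprod R a' {..<Suc m} = a' m \<otimes> finprod R a' {..<m}"
    using a'c a' S unfolding lessThan_Suc by (intro finprod_insert) auto
  also have "finprod R a' {..<m} = finprod R a {..<m}"
    by (rule finprod_cong) (use a S in \<open>auto simp: a'_def Pi_iff\<close>)
  moreover have "a' m = i" by (simp add: a'_def)
  ultimately have "p = finprod R a' {..<Suc m}" using iq a by simp
  then show ?case using a' by blast
qed

lemma finprod_diff_closed:
  fixes n :: nat
  assumes ac: "a \<in> {..n} \<rightarrow> carrier R"
  shows "finprod R a ({..n} - {i}) \<in> carrier R"
  by (rule finprod_closed) (use ac in auto)

lemma finprod_split:
  fixes n :: nat
  assumes ac: "a \<in> {..n} \<rightarrow> carrier R" and i: "i \<le> n"
  shows "finprod R a {..n} = finprod R a ({..n} - {i}) \<otimes> a i"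
proof -
  have e: "{..n} = insert i ({..n} - {i})" using i by auto
  have "finprod R a {..n} = a i \<otimes> finprod R a ({..n} - {i})"
    by (subst e, rule finprod_insert) (use ac i finprod_diff_closed[OF ac] in auto)
  also have "\<dots> = finprod R a ({..n} - {i}) \<otimes> a i"
    using ac i finprod_diff_closed[OF ac] by (intro m_comm) auto
  finally show ?thesis .
qed

lemma zero_not_unit: "\<one> \<noteq> \<zero> \<Longrightarrow> \<zero> \<notin> Units R"
  unfolding Units_def by auto

lemma key:
  assumes one0: "\<one> \<noteq> \<zero>"
    and W: "\<forall>I. ideal I R \<and> I \<noteq> carrier R \<longrightarrow> weakly_n_absorbing R n I"
    and a: "a \<in> {..n} \<rightarrow> jacobson R"
  shows "finprod R a {..n} = \<zero>"
proof (rule ccontr)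
  define p where "p = finprod R a {..n}"
  assume "finprod R a {..n} \<noteq> \<zero>"
  then have p0: "p \<noteq> \<zero>" unfolding p_def .
  have ac: "a \<in> {..n} \<rightarrow> carrier R" using a jac_carrier by blast
  have pc: "p \<in> carrier R" unfolding p_def using ac by simp
  have a0: "a 0 \<in> jacobson R" using a by auto
  have a0c: "a 0 \<in> carrier R" using ac by auto
  have pprop: "PIdl p \<noteq> carrier R"
  proof
    assume "PIdl p = carrier R"
    then have "\<one> \<in> PIdl p" by simp
    then obtain x where x: "x \<in> carrier R" "\<one> = x \<otimes> p" unfolding cgenideal_def by blast
    define q0 where "q0 = finprod R a ({..n} - {0})"
    have q0c: "q0 \<in> carrier R" unfolding q0_def using finprod_diff_closed[OF ac] .
    have "p = q0 \<otimes> a 0" unfolding p_def q0_def by (rule finprod_split[OF ac]) simp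
    then have "\<one> = (x \<otimes> q0) \<otimes> a 0" using x q0c a0c by (simp add: m_assoc)
    moreover have "\<one> \<ominus> (x \<otimes> q0) \<otimes> a 0 \<in> Units R"
      using jac_unit[OF a0] x q0c by simp
    ultimately have "\<zero> \<in> Units R" using x q0c a0c by (metis a_minus_def r_neg m_closed)
    then show False using zero_not_unit[OF one0] by simp
  qed
  have "weakly_n_absorbing R n (PIdl p)" using W cgenideal_ideal[OF pc] pprop by blast
  moreover have "p \<in> PIdl p" using cgenideal_self[OF pc] .
  ultimately obtain i where i: "i \<le> n" "finprod R a ({..n} - {i}) \<in> PIdl p"
    unfolding weakly_n_absorbing_def using ac p0 unfolding p_def by blast
  define q where "q = finprod R a ({..n} - {i})"
  have qc: "q \<in> carrier R" unfolding q_def using finprod_diff_closed[OF ac] .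
  have aic: "a i \<in> carrier R" using ac i by auto
  have ai: "a i \<in> jacobson R" using a i by auto
  have pq: "p = q \<otimes> a i" unfolding p_def q_def by (rule finprod_split[OF ac i(1)])
  obtain x where x: "x \<in> carrier R" "q = x \<otimes> p" using i(2) unfolding cgenideal_def q_def by blast
  define u where "u = \<one> \<ominus> x \<otimes> a i"
  have uU: "u \<in> Units R" unfolding u_def by (rule jac_unit[OF ai x(1)])
  have uc: "u \<in> carrier R" using uU by (simp add: Units_closed)
  have "q \<otimes> (x \<otimes> a i) = q" using x pq qc aic
    by (metis m_assoc m_comm m_closed)
  then have "q \<otimes> u = \<zero>" unfolding u_def using qc x aic
    by (simp add: a_minus_def r_distr r_minus r_neg)
  then have "q \<otimes> u \<otimes> inv u = \<zero>" using uU by simp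
  then have "q = \<zero>" using uU qc uc by (simp add: m_assoc Units_r_inv Units_inv_closed Units_closed)
  then have "p = \<zero>" using pq aic by simp
  then show False using p0 by simp
qed

lemma pow_ann:
  fixes n :: nat
  assumes J: "J \<subseteq> carrier R" and Z: "prods R J (Suc n) \<subseteq> {\<zero>}"
  shows "k \<le> Suc n \<Longrightarrow> x \<in> ideal_pow R J k \<Longrightarrow>
           x \<in> carrier R \<and> (\<forall>p\<in>prods R J (Suc n - k). x \<otimes> p = \<zero>)"
proof (induction k arbitrary: x)
  case 0
  have xc: "x \<in> carrier R" using 0 by simp
  have H: "\<forall>p\<in>prods R J (Suc n). x \<otimes> p = \<zero>"
  proof
    fix p assume "p \<in> prods R J (Suc n)"
    then have "p = \<zero>" using Z by blast
    then show "x \<otimes> p = \<zero>" using xc by simp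
  qed
  show ?case unfolding diff_zero using xc H by blast
next
  case (Suc k)
  have IH: "\<And>y. y \<in> ideal_pow R J k \<Longrightarrow> y \<in> carrier R \<and> (\<forall>p\<in>prods R J (Suc n - k). y \<otimes> p = \<zero>)"
    using Suc by simp
  have e: "Suc n - k = Suc (Suc n - Suc k)" using Suc.prems(1) by simp
  have "x \<in> ideal_prod R J (ideal_pow R J k)" using Suc.prems(2) by simp
  then show ?case
  proof (induction x rule: ideal_prod.induct)
    case (prod i j)
    have ic: "i \<in> carrier R" using prod J by blast
    have jc: "j \<in> carrier R" using IH prod by blast
    have "\<forall>p\<in>prods R J (Suc n - Suc k). i \<otimes> j \<otimes> p = \<zero>"
    proof
      fix p assume p: "p \<in> prods R J (Suc n - Suc k)"
      have pc: "p \<in> carrier R" using p prods_carrier[OF J] by blast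
      have "i \<otimes> p \<in> prods R J (Suc n - k)" using p prod(1) e by auto
      then have "j \<otimes> (i \<otimes> p) = \<zero>" using IH prod(2) by blast
      then show "i \<otimes> j \<otimes> p = \<zero>" using ic jc pc by (metis m_assoc m_comm)
    qed
    then show ?case using ic jc by simp
  next
    case (sum s1 s2)
    have "\<forall>p\<in>prods R J (Suc n - Suc k). (s1 \<oplus> s2) \<otimes> p = \<zero>"
    proof
      fix p assume p: "p \<in> prods R J (Suc n - Suc k)"
      have pc: "p \<in> carrier R" using p prods_carrier[OF J] by blast
      then show "(s1 \<oplus> s2) \<otimes> p = \<zero>" using sum p by (simp add: l_distr)
    qed
    then show ?case using sum by simp
  qed
qed

end

theorem mainTheorem8:
  fixes R (structure) and n :: nat
  assumes "cring R" and "\<one>\<^bsub>R\<^esub> \<noteq> \<zero>\<^bsub>R\<^esub>" and "n > 0"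
    and "\<forall>I. ideal I R \<and> I \<noteq> carrier R \<longrightarrow> weakly_n_absorbing R n I"
  shows "ideal_pow R (jacobson R) (n + 1) = {\<zero>\<^bsub>R\<^esub>} \<and> jacobson R = nilrad R"
proof -
  interpret cring R by fact
  let ?J = "jacobson R"
  have Jc: "?J \<subseteq> carrier R" by (rule jac_carrier)
  have Z: "prods R ?J (Suc n) \<subseteq> {\<zero>}"
  proof
    fix p assume "p \<in> prods R ?J (Suc n)"
    then obtain a where a: "a \<in> {..<Suc n} \<rightarrow> ?J" "p = finprod R a {..<Suc n}"
      using prods_finprod[OF Jc] by blast
    have "p = finprod R a {..n}" using a(2) by (simp add: lessThan_Suc_atMost)
    also have "\<dots> = \<zero>" by (rule key[OF assms(2) assms(4)]) (use a(1) lessThan_Suc_atMost in auto)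
    finally show "p \<in> {\<zero>}" by simp
  qed
  have zJ: "\<zero> \<in> ?J" unfolding jacobson_def
    using additive_subgroup.zero_closed[OF ideal.axioms(1)[OF maximalideal.axioms(1)]] by blast
  have z: "\<zero> \<in> ideal_pow R ?J k" for k
  proof (induction k)
    case 0 then show ?case by simp
  next
    case (Suc k)
    have "\<zero> \<otimes> \<zero> \<in> ideal_prod R ?J (ideal_pow R ?J k)"
      by (rule ideal_prod.prod[OF zJ Suc])
    then show ?case by simp
  qed
  have A: "ideal_pow R ?J (n + 1) = {\<zero>}"
  proof
    show "ideal_pow R ?J (n + 1) \<subseteq> {\<zero>}"
    proof
      fix x assume "x \<in> ideal_pow R ?J (n + 1)"
      then have "x \<in> carrier R \<and> (\<forall>p\<in>prods R ?J (Suc n - Suc n). x \<otimes> p = \<zero>)"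
        using pow_ann[OF Jc Z, of "Suc n" x] by simp
      then show "x \<in> {\<zero>}" using r_one by force
    qed
    show "{\<zero>} \<subseteq> ideal_pow R ?J (n + 1)" using z[of "Suc n"] by simp
  qed
  have pw: "x \<in> ?J \<Longrightarrow> x [^] m \<in> prods R ?J m" for x m
  proof (induction m)
    case 0 then show ?case by simp
  next
    case (Suc m)
    have "x [^] Suc m = x \<otimes> x [^] m" using Suc.prems Jc by (metis subsetD nat_pow_Suc nat_pow_closed m_comm)
    then show ?case using Suc by auto
  qed
  have B1: "?J \<subseteq> nilrad R"
  proof
    fix x assume x: "x \<in> ?J"
    have "x [^] Suc n = \<zero>" using pw[OF x, of "Suc n"] Z by blast
    then show "x \<in> nilrad R" unfolding nilrad_def using x Jc by blast
  qed
  have B2: "nilrad R \<subseteq> ?J"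
  proof
    fix x assume x: "x \<in> nilrad R"
    then obtain k where xc: "x \<in> carrier R" and xk: "x [^] (k::nat) = \<zero>"
      unfolding nilrad_def by blast
    have "x \<in> M" if M: "maximalideal M R" for M
    proof -
      interpret primeideal M R using maximalideal_prime[OF M] .
      have "x [^] j \<in> M \<Longrightarrow> x \<in> M" for j :: nat
      proof (induction j)
        case 0 then have "\<one> \<in> M" by simp
        then show ?case using one_imp_carrier I_notcarr by simp
      next
        case (Suc j)
        then have "x [^] j \<otimes> x \<in> M" by (simp add: nat_pow_Suc)
        then show ?case using Suc xc I_prime by blast
      qed
      moreover have "x [^] k \<in> M" using xk additive_subgroup.zero_closed[OF ideal.axioms(1)[OF is_ideal]] by simp
      ultimately show ?thesis by blast
    qed
    then show "x \<in> ?J" unfolding jacobson_def using xc by blast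
  qed
  show ?thesis using A B1 B2 by blast
qed

end
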